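(* Let $H$ be a poly-$\mathbb{Z}$ group, $A$ an $n\times n$ matrix over $\mathbb{Z}H$, and $f_A:\mathbb{Z}H^n\to\mathbb{Z}H^n$ the homomorphism of free $\mathbb{Z}H$-modules given by left multiplication by $A$ on columns. If the induced map $(\mathbb{Z}H/\Delta(H))^n\cong\mathbb{Z}^n\to\mathbb{Z}^n$, which is left multiplication by $\varepsilon(A)$, is injective, then $f_A$ is injective.
   Context: A group is poly-$\mathbb{Z}$ if it has a subnormal series all of whose factors are infinite cyclic. $\varepsilon:\mathbb{Z}H\to\mathbb{Z}$, $\sum n_ih_i\mapsto\sum n_i$, is the augmentation map, $\Delta(H)$ its kernel, and $\varepsilon(A)$ denotes the integer matrix obtained by applying $\varepsilon$ to each entry of $A$. *)

theory Defs
  imports "HOL-Algebra.Algebra"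
begin

definition poly_Z :: "('a, 'b) monoid_scheme \<Rightarrow> bool" where
  "poly_Z G \<longleftrightarrow> (\<exists>(k::nat) (S :: nat \<Rightarrow> 'a set).
      S 0 = {\<one>\<^bsub>G\<^esub>} \<and> S k = carrier G \<and>
      (\<forall>i\<le>k. subgroup (S i) G) \<and>
      (\<forall>i<k. S i \<subseteq> S (Suc i) \<and>
             normal (S i) (G\<lparr>carrier := S (Suc i)\<rparr>) \<and>
             ((G\<lparr>carrier := S (Suc i)\<rparr>) Mod (S i)) \<cong> integer_group))"

definition group_ring :: "('a, 'b) monoid_scheme \<Rightarrow> ('a \<Rightarrow> int) set" where
  "group_ring G = {a. finite {g. a g \<noteq> 0} \<and> (\<forall>g. a g \<noteq> 0 \<longrightarrow> g \<in> carrier G)}"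

text \<open>Multiplication in ZH (convolution); addition is pointwise, zero is \<open>\<lambda>_. 0\<close>.\<close>
definition gr_mult :: "('a, 'b) monoid_scheme \<Rightarrow> ('a \<Rightarrow> int) \<Rightarrow> ('a \<Rightarrow> int) \<Rightarrow> ('a \<Rightarrow> int)" where
  "gr_mult G a b = (\<lambda>x. \<Sum>(g, h) \<in> {g. a g \<noteq> 0} \<times> {h. b h \<noteq> 0}.
                        if g \<otimes>\<^bsub>G\<^esub> h = x then a g * b h else 0)"

definition augmentation :: "('a \<Rightarrow> int) \<Rightarrow> int" where
  "augmentation a = (\<Sum>g \<in> {g. a g \<noteq> 0}. a g)"

text \<open>Left multiplication of a column vector in ZH^n by an n x n matrix over ZH
 (vectors/matrices are functions on indices, zero outside the range).\<close>
definition gr_mat_apply :: "('a, 'b) monoid_scheme \<Rightarrow> nat \<Rightarrow> (nat \<Rightarrow> nat \<Rightarrow> ('a \<Rightarrow> int))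
      \<Rightarrow> (nat \<Rightarrow> ('a \<Rightarrow> int)) \<Rightarrow> (nat \<Rightarrow> ('a \<Rightarrow> int))" where
  "gr_mat_apply G n A v = (\<lambda>i. if i < n then (\<lambda>x. \<Sum>j<n. gr_mult G (A i j) (v j) x) else (\<lambda>_. 0))"

definition int_mat_apply :: "nat \<Rightarrow> (nat \<Rightarrow> nat \<Rightarrow> int) \<Rightarrow> (nat \<Rightarrow> int) \<Rightarrow> (nat \<Rightarrow> int)" where
  "int_mat_apply n M x = (\<lambda>i. if i < n then (\<Sum>j<n. M i j * x j) else 0)"

end

theory Submission
  imports Defs
begin

lemma phi_exists:
  assumes grp: "group H" and L: "subgroup L H" and KL: "K \<subseteq> L"
    and nrm: "normal K (H\<lparr>carrier := L\<rparr>)"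
    and iso: "((H\<lparr>carrier := L\<rparr>) Mod K) \<cong> integer_group"
  shows "\<exists>\<phi>::'a \<Rightarrow> int. (\<forall>a\<in>L. \<forall>b\<in>L. \<phi> (a \<otimes>\<^bsub>H\<^esub> b) = \<phi> a + \<phi> b)
      \<and> (\<forall>a\<in>L. \<phi> a = 0 \<longleftrightarrow> a \<in> K) \<and> (\<forall>m. \<exists>a\<in>L. \<phi> a = m)"
proof -
  let ?G = "H\<lparr>carrier := L\<rparr>"
  have gG: "group ?G" using subgroup.subgroup_is_group[OF L grp] .
  obtain h where h: "h \<in> hom (?G Mod K) integer_group" "bij_betw h (carrier (?G Mod K)) UNIV"
    using iso unfolding is_iso_def iso_def by auto
  have fg: "group (?G Mod K)" using normal.factorgroup_is_group[OF nrm] .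
  interpret gh: group_hom "?G Mod K" integer_group h
    using h(1) fg by (simp add: group_hom_def group_hom_axioms_def)
  define \<phi> where "\<phi> a = h (K #>\<^bsub>?G\<^esub> a)" for a
  have cK: "K #>\<^bsub>?G\<^esub> a \<in> carrier (?G Mod K)" if "a \<in> L" for a
    using that by (simp add: carrier_FactGroup)
  have 1: "\<phi> (a \<otimes>\<^bsub>H\<^esub> b) = \<phi> a + \<phi> b" if "a \<in> L" "b \<in> L" for a b
  proof -
    have "K #>\<^bsub>?G\<^esub> (a \<otimes>\<^bsub>?G\<^esub> b) = (K #>\<^bsub>?G\<^esub> a) \<otimes>\<^bsub>?G Mod K\<^esub> (K #>\<^bsub>?G\<^esub> b)"
      using normal.rcos_sum[OF nrm, of a b] that by (simp add: FactGroup_def)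
    then show ?thesis unfolding \<phi>_def using gh.hom_mult[OF cK[OF that(1)] cK[OF that(2)]] 
      by (simp add: integer_group_def)
  qed
  have 2: "\<phi> a = 0 \<longleftrightarrow> a \<in> K" if "a \<in> L" for a
  proof -
    have one: "h K = 0" using gh.hom_one by (simp add: integer_group_def)
    have sK: "subgroup K ?G" using normal_imp_subgroup[OF nrm] .
    have "K #>\<^bsub>?G\<^esub> \<one>\<^bsub>?G\<^esub> = K"
      using subgroup.rcos_const[OF sK gG subgroup.one_closed[OF sK]] .
    moreover have "\<one>\<^bsub>?G\<^esub> \<in> L" using subgroup.one_closed[OF L] by simp
    ultimately have Kc: "K \<in> carrier (?G Mod K)" using cK by metis
    have "\<phi> a = 0 \<longleftrightarrow> K #>\<^bsub>?G\<^esub> a = K"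
      unfolding \<phi>_def using h(2) cK[OF that] Kc one unfolding bij_betw_def inj_on_def by metis
    also have "\<dots> \<longleftrightarrow> a \<in> K"
      using that gG nrm
      by (metis group.rcos_self normal_imp_subgroup partial_object.select_convs(1) partial_object.surjective partial_object.update_convs(1) subgroup.rcos_const)
    finally show ?thesis .
  qed
  have 3: "\<exists>a\<in>L. \<phi> a = m" for m
  proof -
    have "m \<in> h ` carrier (?G Mod K)" using h(2) unfolding bij_betw_def by simp
    then show ?thesis unfolding \<phi>_def carrier_FactGroup by auto
  qed
  show ?thesis using 1 2 3 by blast
qed

definition spt :: "('w \<Rightarrow> int) \<Rightarrow> 'w set" where "spt v = {w. v w \<noteq> 0}"
definition finf :: "'w set \<Rightarrow> ('w \<Rightarrow> int) set" where
  "finf W = {v. finite (spt v) \<and> spt v \<subseteq> W}"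
definition orb :: "'a set \<Rightarrow> ('w \<Rightarrow> 'a \<Rightarrow> 'w) \<Rightarrow> 'w \<Rightarrow> 'w set" where
  "orb K act w = {act w k | k. k \<in> K}"
definition rho :: "'a set \<Rightarrow> ('w \<Rightarrow> 'a \<Rightarrow> 'w) \<Rightarrow> ('w \<Rightarrow> int) \<Rightarrow> 'w \<Rightarrow> int" where
  "rho K act v w = (\<Sum>u\<in>{u\<in>spt v. u \<in> orb K act w}. v u)"
definition sh :: "('a,'b) monoid_scheme \<Rightarrow> 'w set \<Rightarrow> ('w \<Rightarrow> 'a \<Rightarrow> 'w) \<Rightarrow> 'a \<Rightarrow> ('w \<Rightarrow> int) \<Rightarrow> 'w \<Rightarrow> int" where
  "sh H W act g v = (\<lambda>u. if u \<in> W then v (act u (inv\<^bsub>H\<^esub> g)) else 0)"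
definition app :: "('w \<Rightarrow> 'v \<Rightarrow> int) \<Rightarrow> ('w \<Rightarrow> int) \<Rightarrow> 'v \<Rightarrow> int" where
  "app F v = (\<lambda>y. \<Sum>w\<in>spt v. v w * F w y)"
definition freeact :: "('a,'b) monoid_scheme \<Rightarrow> 'w set \<Rightarrow> ('w \<Rightarrow> 'a \<Rightarrow> 'w) \<Rightarrow> bool" where
  "freeact H W act \<longleftrightarrow> (\<forall>w\<in>W. \<forall>h\<in>carrier H. act w h \<in> W) \<and> (\<forall>w\<in>W. act w \<one>\<^bsub>H\<^esub> = w)
     \<and> (\<forall>w\<in>W. \<forall>g\<in>carrier H. \<forall>h\<in>carrier H. act (act w g) h = act w (g \<otimes>\<^bsub>H\<^esub> h))
     \<and> (\<forall>w\<in>W. \<forall>h\<in>carrier H. act w h = w \<longrightarrow> h = \<one>\<^bsub>H\<^esub>)"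
definition kern :: "'a set \<Rightarrow> 'w set \<Rightarrow> ('w \<Rightarrow> 'a \<Rightarrow> 'w) \<Rightarrow> 'v set \<Rightarrow> ('v \<Rightarrow> 'a \<Rightarrow> 'v) \<Rightarrow> ('w \<Rightarrow> 'v \<Rightarrow> int) \<Rightarrow> bool" where
  "kern K W act W' act' F \<longleftrightarrow> (\<forall>w\<in>W. F w \<in> finf W') \<and>
     (\<forall>w\<in>W. \<forall>y\<in>W'. \<forall>k\<in>K. F (act w k) (act' y k) = F w y)"

locale zstep =
  fixes H :: "('a,'b) monoid_scheme" and K L :: "'a set" and \<phi> :: "'a \<Rightarrow> int" and t :: 'a
  assumes grp: "group H" and Lsub: "subgroup L H" and KL: "K \<subseteq> L"
    and phi_mult: "\<And>a b. a \<in> L \<Longrightarrow> b \<in> L \<Longrightarrow> \<phi> (a \<otimes>\<^bsub>H\<^esub> b) = \<phi> a + \<phi> b"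
    and phi_ker: "\<And>a. a \<in> L \<Longrightarrow> \<phi> a = 0 \<longleftrightarrow> a \<in> K"
    and phi_surj: "\<And>m. \<exists>a\<in>L. \<phi> a = m"
    and tL: "t \<in> L" and phit: "\<phi> t = 1"
begin

sublocale group H by (rule grp)

lemma cancel1: "a \<in> carrier H \<Longrightarrow> b \<in> carrier H \<Longrightarrow> a \<otimes>\<^bsub>H\<^esub> (inv\<^bsub>H\<^esub> a \<otimes>\<^bsub>H\<^esub> b) = b"
  by (simp add: m_assoc[symmetric] r_inv)

lemma Lc: "l \<in> L \<Longrightarrow> l \<in> carrier H" using subgroup.subset[OF Lsub] by blast
lemma Kc: "k \<in> K \<Longrightarrow> k \<in> carrier H" using KL Lc by blast
lemma oneL: "\<one>\<^bsub>H\<^esub> \<in> L" by (rule subgroup.one_closed[OF Lsub])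
lemma invL: "l \<in> L \<Longrightarrow> inv\<^bsub>H\<^esub> l \<in> L" by (rule subgroup.m_inv_closed[OF Lsub])
lemma multL: "a \<in> L \<Longrightarrow> b \<in> L \<Longrightarrow> a \<otimes>\<^bsub>H\<^esub> b \<in> L" by (rule subgroup.m_closed[OF Lsub])
lemma phi_one: "\<phi> \<one>\<^bsub>H\<^esub> = 0"
  using phi_mult[OF oneL oneL] grp by (simp add: group.is_monoid oneL Lc)
lemma phi_inv: assumes "l \<in> L" shows "\<phi> (inv\<^bsub>H\<^esub> l) = - \<phi> l"
proof -
  have "l \<otimes>\<^bsub>H\<^esub> inv\<^bsub>H\<^esub> l = \<one>\<^bsub>H\<^esub>" using grp assms Lc group.r_inv by metis
  then show ?thesis using phi_mult[OF assms invL[OF assms]] phi_one by simp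
qed

end

locale zact = zstep +
  fixes W :: "'w set" and act :: "'w \<Rightarrow> 'a \<Rightarrow> 'w"
  assumes fa: "freeact H W act"
begin

lemma A1: "w \<in> W \<Longrightarrow> h \<in> carrier H \<Longrightarrow> act w h \<in> W" using fa unfolding freeact_def by blast
lemma A2: "w \<in> W \<Longrightarrow> act w \<one>\<^bsub>H\<^esub> = w" using fa unfolding freeact_def by blast
lemma A3: "w \<in> W \<Longrightarrow> g \<in> carrier H \<Longrightarrow> h \<in> carrier H \<Longrightarrow> act (act w g) h = act w (g \<otimes>\<^bsub>H\<^esub> h)"
  using fa unfolding freeact_def by blast
lemma A4: "w \<in> W \<Longrightarrow> h \<in> carrier H \<Longrightarrow> act w h = w \<Longrightarrow> h = \<one>\<^bsub>H\<^esub>" using fa unfolding freeact_def by blast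

lemma free2: assumes "w \<in> W" "g \<in> carrier H" "h \<in> carrier H" "act w g = act w h" shows "g = h"
proof -
  have "act w (g \<otimes>\<^bsub>H\<^esub> inv\<^bsub>H\<^esub> h) = act (act w g) (inv\<^bsub>H\<^esub> h)"
    using A3[OF assms(1,2) group.inv_closed[OF grp assms(3)]] by (rule sym)
  also have "\<dots> = act (act w h) (inv\<^bsub>H\<^esub> h)" using assms(4) by simp
  also have "\<dots> = act w (h \<otimes>\<^bsub>H\<^esub> inv\<^bsub>H\<^esub> h)" using assms A3 grp by (simp add: group.inv_closed)
  also have "\<dots> = w" using assms A2 grp by (simp add: group.r_inv)
  finally have "g \<otimes>\<^bsub>H\<^esub> inv\<^bsub>H\<^esub> h = \<one>\<^bsub>H\<^esub>" using A4 assms grp by (meson group.inv_closed group.subgroup_self subgroup.m_closed)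
  then show ?thesis using assms grp by (metis group.inv_equality group.inv_inv group.inv_closed)
qed

lemma AL: "w \<in> W \<Longrightarrow> l \<in> L \<Longrightarrow> act w l \<in> W" using A1 Lc by blast
lemma A3L: "w \<in> W \<Longrightarrow> g \<in> L \<Longrightarrow> h \<in> L \<Longrightarrow> act (act w g) h = act w (g \<otimes>\<^bsub>H\<^esub> h)" using A3 Lc by blast

lemma orb_self: "w \<in> W \<Longrightarrow> w \<in> orb L act w"
  unfolding orb_def using A2 oneL by force

lemma orb_W: "w \<in> W \<Longrightarrow> u \<in> orb L act w \<Longrightarrow> u \<in> W"
  unfolding orb_def using AL by blast

lemma orb_eq: assumes "w \<in> W" "u \<in> orb L act w" shows "orb L act u = orb L act w"
proof -
  obtain l where l: "l \<in> L" "u = act w l" using assms unfolding orb_def by blast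
  have "w = act u (inv\<^bsub>H\<^esub> l)" using l A3L[OF assms(1) l(1) invL[OF l(1)]] A2[OF assms(1)] grp
    by (simp add: group.r_inv Lc)
  show ?thesis
  proof
    show "orb L act u \<subseteq> orb L act w" unfolding orb_def using l A3L[OF assms(1) l(1)] multL by force
    show "orb L act w \<subseteq> orb L act u" 
    proof
      fix x assume "x \<in> orb L act w"
      then obtain m where m: "m \<in> L" "x = act w m" unfolding orb_def by blast
      have uW: "u \<in> W" using AL[OF assms(1) l(1)] l(2) by simp
      have "x = act w m" by (rule m(2))
      also have "\<dots> = act (act u (inv\<^bsub>H\<^esub> l)) m"
        by (rule arg_cong[where f="\<lambda>z. act z m"], fact)
      also have "\<dots> = act u (inv\<^bsub>H\<^esub> l \<otimes>\<^bsub>H\<^esub> m)"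
        by (rule A3L[OF uW invL[OF l(1)] m(1)])
      finally have "x = act u (inv\<^bsub>H\<^esub> l \<otimes>\<^bsub>H\<^esub> m)" .
      then show "x \<in> orb L act u" unfolding orb_def using multL invL l m by blast
    qed
  qed
qed

definition base :: "'w \<Rightarrow> 'w" where "base w = (SOME b. b \<in> orb L act w)"
definition lw :: "'w \<Rightarrow> 'a" where "lw w = (SOME l. l \<in> L \<and> w = act (base w) l)"
definition hgt :: "'w \<Rightarrow> int" where "hgt w = \<phi> (lw w)"
definition crep :: "'w \<Rightarrow> int \<Rightarrow> 'w" where "crep b m = act b (SOME l. l \<in> L \<and> \<phi> l = m)"

lemma base_orb: "w \<in> W \<Longrightarrow> base w \<in> orb L act w"
  unfolding base_def using orb_self by (metis someI_ex)
lemma base_W: "w \<in> W \<Longrightarrow> base w \<in> W" using base_orb orb_W by blast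
lemma base_cong: "w \<in> W \<Longrightarrow> u \<in> orb L act w \<Longrightarrow> base u = base w"
  unfolding base_def using orb_eq by simp
lemma base_base: "w \<in> W \<Longrightarrow> base (base w) = base w" using base_cong base_orb by blast

lemma lw: assumes "w \<in> W" shows "lw w \<in> L \<and> w = act (base w) (lw w)"
proof -
  obtain l where l: "l \<in> L" "base w = act w l" using base_orb[OF assms] unfolding orb_def by blast
  have "act (base w) (inv\<^bsub>H\<^esub> l) = w" using l A3L[OF assms l(1) invL[OF l(1)]] A2[OF assms] grp
    by (simp add: group.r_inv Lc)
  then have "\<exists>l. l \<in> L \<and> w = act (base w) l" using invL[OF l(1)] by (intro exI[of _ "inv\<^bsub>H\<^esub> l"]) simp
  then show ?thesis unfolding lw_def by (rule someI_ex)
qed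

lemma lw': assumes "w \<in> W" shows "act (base w) (lw w) = w"
proof -
  have "w = act (base w) (lw w)" using lw[OF assms] by blast
  then show ?thesis by (rule sym)
qed
lemma lw_unique: "w \<in> W \<Longrightarrow> l \<in> L \<Longrightarrow> w = act (base w) l \<Longrightarrow> l = lw w"
proof -
  assume a: "w \<in> W" "l \<in> L" "w = act (base w) l"
  have "act (base w) l = w" using a(3) by (rule sym)
  also have "\<dots> = act (base w) (lw w)" by (rule lw'[OF a(1), symmetric])
  finally have "act (base w) l = act (base w) (lw w)" .
  then show "l = lw w" using free2[OF base_W[OF a(1)] Lc[OF a(2)] Lc] lw[OF a(1)] by blast
qed

lemma act_base_hgt: assumes "w \<in> W" "l \<in> L"
  shows "base (act w l) = base w \<and> lw (act w l) = lw w \<otimes>\<^bsub>H\<^esub> l \<and> hgt (act w l) = hgt w + \<phi> l"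
proof -
  have b: "base (act w l) = base w" using base_cong assms unfolding orb_def by blast
  have "act w l = act (act (base w) (lw w)) l" using lw'[OF assms(1)] by simp
  also have "\<dots> = act (base w) (lw w \<otimes>\<^bsub>H\<^esub> l)"
    by (rule A3L[OF base_W[OF assms(1)] conjunct1[OF lw[OF assms(1)]] assms(2)])
  finally have e: "act w l = act (base (act w l)) (lw w \<otimes>\<^bsub>H\<^esub> l)" using b by simp
  have "lw (act w l) = lw w \<otimes>\<^bsub>H\<^esub> l"
    using lw_unique[OF AL[OF assms] multL[OF conjunct1[OF lw[OF assms(1)]] assms(2)] e] by (rule sym)
  then show ?thesis using b phi_mult[OF conjunct1[OF lw[OF assms(1)]] assms(2)] unfolding hgt_def by simp
qed

lemma classL: assumes "u \<in> W" "w \<in> W" shows "u \<in> orb L act w \<longleftrightarrow> base u = base w"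
proof
  assume "u \<in> orb L act w" then show "base u = base w" using base_cong assms by blast
next
  assume b: "base u = base w"
  have lwu: "lw u \<in> L" and lww: "lw w \<in> L" using lw assms by blast+
  have kL: "inv\<^bsub>H\<^esub> (lw w) \<otimes>\<^bsub>H\<^esub> lw u \<in> L" by (rule multL[OF invL[OF lww] lwu])
  have "act w (inv\<^bsub>H\<^esub> (lw w) \<otimes>\<^bsub>H\<^esub> lw u) = act (act (base w) (lw w)) (inv\<^bsub>H\<^esub> (lw w) \<otimes>\<^bsub>H\<^esub> lw u)"
    using lw'[OF assms(2)] by simp
  also have "\<dots> = act (base w) (lw w \<otimes>\<^bsub>H\<^esub> (inv\<^bsub>H\<^esub> (lw w) \<otimes>\<^bsub>H\<^esub> lw u))"
    by (rule A3L[OF base_W[OF assms(2)] conjunct1[OF lw[OF assms(2)]] multL[OF invL[OF conjunct1[OF lw[OF assms(2)]]] conjunct1[OF lw[OF assms(1)]]]])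
  also have "\<dots> = act (base w) (lw u)" using cancel1[OF Lc[OF lww] Lc[OF lwu]] by simp
  also have "\<dots> = u" using b lw'[OF assms(1)] by simp
  finally have e: "act w (inv\<^bsub>H\<^esub> (lw w) \<otimes>\<^bsub>H\<^esub> lw u) = u" .
  show "u \<in> orb L act w" unfolding orb_def using kL e[symmetric] by blast
qed

lemma classK: assumes "u \<in> W" "w \<in> W" shows "u \<in> orb K act w \<longleftrightarrow> base u = base w \<and> hgt u = hgt w"
proof
  assume "u \<in> orb K act w"
  then obtain k where "k \<in> K" "u = act w k" unfolding orb_def by blast
  then show "base u = base w \<and> hgt u = hgt w" using act_base_hgt[OF assms(2)] KL phi_ker by auto
next
  assume b: "base u = base w \<and> hgt u = hgt w"
  have lwu: "lw u \<in> L" and lww: "lw w \<in> L" using lw assms by blast+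
  define k where "k = inv\<^bsub>H\<^esub> (lw w) \<otimes>\<^bsub>H\<^esub> lw u"
  have kL: "k \<in> L" unfolding k_def by (rule multL[OF invL[OF lww] lwu])
  have "\<phi> k = 0" unfolding k_def using phi_mult[OF invL[OF lww] lwu] phi_inv[OF lww] b unfolding hgt_def by simp
  then have kK: "k \<in> K" using phi_ker kL by blast
  have "act w k = act (act (base w) (lw w)) k"
    using lw'[OF assms(2)] by simp
  also have "\<dots> = act (base w) (lw w \<otimes>\<^bsub>H\<^esub> k)"
    by (rule A3L[OF base_W[OF assms(2)] conjunct1[OF lw[OF assms(2)]] kL])
  also have "\<dots> = act (base w) (lw u)" unfolding k_def using cancel1[OF Lc[OF lww] Lc[OF lwu]] by simp
  also have "\<dots> = u" using b lw'[OF assms(1)] by simp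
  finally have e: "act w k = u" .
  show "u \<in> orb K act w" unfolding orb_def using kK e[symmetric] by blast
qed

lemma hgt_base: "w \<in> W \<Longrightarrow> hgt (base w) = 0"
proof -
  assume w: "w \<in> W"
  have "base w = act (base (base w)) \<one>\<^bsub>H\<^esub>" using base_base[OF w] A2 base_W[OF w] by simp
  then have "lw (base w) = \<one>\<^bsub>H\<^esub>" using lw_unique[OF base_W[OF w] oneL] by simp
  then show ?thesis unfolding hgt_def using phi_one by simp
qed

lemma crep: assumes "w \<in> W"
  shows "crep (base w) m \<in> W \<and> base (crep (base w) m) = base w \<and> hgt (crep (base w) m) = m"
proof -
  obtain l where l: "l \<in> L" "\<phi> l = m" using phi_surj by blast
  then have l2: "(SOME l. l \<in> L \<and> \<phi> l = m) \<in> L \<and> \<phi> (SOME l. l \<in> L \<and> \<phi> l = m) = m"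
    by (metis (mono_tags, lifting) someI_ex)
  show ?thesis unfolding crep_def using act_base_hgt[OF base_W[OF assms] conjunct1[OF l2]] l2
      base_base[OF assms] hgt_base[OF assms] AL[OF base_W[OF assms]] by simp
qed

lemma hgt_t: "w \<in> W \<Longrightarrow> base (act w t) = base w \<and> hgt (act w t) = hgt w + 1"
  using act_base_hgt[OF _ tL] phit by simp
lemma hgt_tinv: "w \<in> W \<Longrightarrow> base (act w (inv\<^bsub>H\<^esub> t)) = base w \<and> hgt (act w (inv\<^bsub>H\<^esub> t)) = hgt w - 1"
proof -
  assume w: "w \<in> W"
  show ?thesis using act_base_hgt[OF w invL[OF tL]] phi_inv[OF tL] phit by simp
qed

end

lemma finfD: "v \<in> finf W \<Longrightarrow> finite (spt v) \<and> spt v \<subseteq> W" unfolding finf_def by simp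
lemma spt_iff: "x \<in> spt v \<longleftrightarrow> v x \<noteq> 0" unfolding spt_def by simp

lemma rho_sup: assumes "finite S" "spt v \<subseteq> S"
  shows "rho K act v w = (\<Sum>u\<in>{u\<in>S. u \<in> orb K act w}. v u)"
  unfolding rho_def
  by (rule sum.mono_neutral_left) (use assms in \<open>auto simp: spt_def\<close>)

lemma app_sup: assumes "finite S" "spt v \<subseteq> S"
  shows "app F v y = (\<Sum>w\<in>S. v w * F w y)"
  unfolding app_def
  by (rule sum.mono_neutral_left) (use assms in \<open>auto simp: spt_def\<close>)

lemma spt_diff: "spt (\<lambda>x. v1 x - v2 x) \<subseteq> spt v1 \<union> spt v2" unfolding spt_def by auto

lemma finf_diff: "v1 \<in> finf W \<Longrightarrow> v2 \<in> finf W \<Longrightarrow> (\<lambda>x. v1 x - v2 x) \<in> finf W"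
proof -
  assume a: "v1 \<in> finf W" "v2 \<in> finf W"
  have "finite (spt (\<lambda>x. v1 x - v2 x))"
    by (rule finite_subset[OF spt_diff]) (use finfD[OF a(1)] finfD[OF a(2)] in simp)
  moreover have "spt v1 \<union> spt v2 \<subseteq> W" using finfD[OF a(1)] finfD[OF a(2)] by simp
  then have "spt (\<lambda>x. v1 x - v2 x) \<subseteq> W" using spt_diff by (rule subset_trans[rotated])
  ultimately show ?thesis unfolding finf_def by blast
qed

lemma rho_diff: assumes "finite (spt v1)" "finite (spt v2)"
  shows "rho K act (\<lambda>x. v1 x - v2 x) w = rho K act v1 w - rho K act v2 w"
proof -
  let ?S = "spt v1 \<union> spt v2"
  have "rho K act (\<lambda>x. v1 x - v2 x) w = (\<Sum>u\<in>{u\<in>?S. u \<in> orb K act w}. v1 u - v2 u)"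
    by (rule rho_sup[OF finite_UnI[OF assms] spt_diff])
  also have "\<dots> = rho K act v1 w - rho K act v2 w"
    unfolding rho_sup[of ?S v1, OF finite_UnI[OF assms] Un_upper1] rho_sup[of ?S v2, OF finite_UnI[OF assms] Un_upper2]
    by (rule sum_subtractf)
  finally show ?thesis .
qed

lemma app_diff: assumes "finite (spt v1)" "finite (spt v2)"
  shows "app F (\<lambda>x. v1 x - v2 x) = (\<lambda>y. app F v1 y - app F v2 y)"
proof
  fix y
  let ?S = "spt v1 \<union> spt v2"
  have "app F (\<lambda>x. v1 x - v2 x) y = (\<Sum>w\<in>?S. (v1 w - v2 w) * F w y)"
    by (rule app_sup[OF finite_UnI[OF assms] spt_diff])
  also have "\<dots> = app F v1 y - app F v2 y"
    unfolding app_sup[of ?S v1, OF finite_UnI[OF assms] Un_upper1] app_sup[of ?S v2, OF finite_UnI[OF assms] Un_upper2]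
    by (simp add: sum_subtractf left_diff_distrib)
  finally show "app F (\<lambda>x. v1 x - v2 x) y = app F v1 y - app F v2 y" .
qed

context zact begin

lemma rhoK_h: assumes "v \<in> finf W" "w \<in> W"
  shows "rho K act v w = (\<Sum>x\<in>{x\<in>spt v. base x = base w \<and> hgt x = hgt w}. v x)"
proof -
  have "{u\<in>spt v. u \<in> orb K act w} = {x\<in>spt v. base x = base w \<and> hgt x = hgt w}"
    using classK assms finfD by blast
  then show ?thesis unfolding rho_def by simp
qed

lemma rhoL_h: assumes "v \<in> finf W" "w \<in> W"
  shows "rho L act v w = (\<Sum>x\<in>{x\<in>spt v. base x = base w}. v x)"
proof -
  have "{u\<in>spt v. u \<in> orb L act w} = {x\<in>spt v. base x = base w}"
    using classL assms finfD by blast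
  then show ?thesis unfolding rho_def by simp
qed

lemma ginv_c: "g \<in> L \<Longrightarrow> inv\<^bsub>H\<^esub> g \<in> carrier H" using invL Lc by blast
lemma g_c: "g \<in> L \<Longrightarrow> g \<in> carrier H" using Lc by blast

lemma act_g_ginv: "g \<in> L \<Longrightarrow> x \<in> W \<Longrightarrow> act (act x g) (inv\<^bsub>H\<^esub> g) = x"
  using A3[OF _ g_c ginv_c] A2 g_c by (simp add: r_inv)
lemma act_ginv_g: "g \<in> L \<Longrightarrow> x \<in> W \<Longrightarrow> act (act x (inv\<^bsub>H\<^esub> g)) g = x"
  using A3[OF _ ginv_c g_c] A2 g_c by (simp add: l_inv)

lemma spt_shg: assumes "v \<in> finf W" and gL: "g \<in> L"
  shows "spt (sh H W act g v) = (\<lambda>x. act x g) ` spt v"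
proof
  show "spt (sh H W act g v) \<subseteq> (\<lambda>x. act x g) ` spt v"
  proof
    fix u assume u: "u \<in> spt (sh H W act g v)"
    then have uW: "u \<in> W" and nz: "v (act u (inv\<^bsub>H\<^esub> g)) \<noteq> 0" unfolding spt_def sh_def by (auto split: if_splits)
    show "u \<in> (\<lambda>x. act x g) ` spt v"
      by (rule image_eqI[where x="act u (inv\<^bsub>H\<^esub> g)"]) (use act_ginv_g[OF gL uW] nz in \<open>simp_all add: spt_iff\<close>)
  qed
  show "(\<lambda>x. act x g) ` spt v \<subseteq> spt (sh H W act g v)"
  proof
    fix y assume "y \<in> (\<lambda>x. act x g) ` spt v"
    then obtain x where x: "x \<in> spt v" "y = act x g" by blast
    have xW: "x \<in> W" using x(1) finfD[OF assms(1)] by blast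
    have "sh H W act g v y = v x" using x(2) A1[OF xW g_c[OF gL]] act_g_ginv[OF gL xW] unfolding sh_def by simp
    then show "y \<in> spt (sh H W act g v)" using x(1) by (simp add: spt_iff)
  qed
qed

lemma inj_g: assumes gL: "g \<in> L" shows "inj_on (\<lambda>x. act x g) W"
proof (rule inj_onI)
  fix x y assume "x \<in> W" "y \<in> W" "act x g = act y g"
  then show "x = y" using act_g_ginv[OF gL, of x] act_g_ginv[OF gL, of y] by metis
qed

lemma sh_fing: "g \<in> L \<Longrightarrow> v \<in> finf W \<Longrightarrow> sh H W act g v \<in> finf W"
  using spt_shg finfD A1 g_c unfolding finf_def by auto

lemma rho_shg: assumes v: "v \<in> finf W" and w: "w \<in> W" and gL: "g \<in> L"
  shows "rho K act (sh H W act g v) w = rho K act v (act w (inv\<^bsub>H\<^esub> g))"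
proof -
  have wt: "act w (inv\<^bsub>H\<^esub> g) \<in> W" using A1 w ginv_c[OF gL] by blast
  have im: "{y\<in>f ` A. P y} = f ` {x\<in>A. P (f x)}" for f :: "'w \<Rightarrow> 'w" and A P by blast
  have cg: "{x\<in>spt v. base (act x g) = base w \<and> hgt (act x g) = hgt w}
     = {x\<in>spt v. base x = base (act w (inv\<^bsub>H\<^esub> g)) \<and> hgt x = hgt (act w (inv\<^bsub>H\<^esub> g))}"
  proof (rule Collect_cong)
    fix x
    show "(x \<in> spt v \<and> base (act x g) = base w \<and> hgt (act x g) = hgt w) =
          (x \<in> spt v \<and> base x = base (act w (inv\<^bsub>H\<^esub> g)) \<and> hgt x = hgt (act w (inv\<^bsub>H\<^esub> g)))"
    proof (cases "x \<in> spt v")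
      case True
      then have "x \<in> W" using finfD[OF v] by blast
      then show ?thesis using act_base_hgt[OF _ gL, of x] act_base_hgt[OF w invL[OF gL]] phi_inv[OF gL] True by auto
    qed simp
  qed
  have "{x\<in>spt (sh H W act g v). base x = base w \<and> hgt x = hgt w}
       = (\<lambda>x. act x g) ` {x\<in>spt v. base x = base (act w (inv\<^bsub>H\<^esub> g)) \<and> hgt x = hgt (act w (inv\<^bsub>H\<^esub> g))}"
    unfolding spt_shg[OF v gL] im cg ..
  moreover have "inj_on (\<lambda>x. act x g) {x\<in>spt v. base x = base (act w (inv\<^bsub>H\<^esub> g)) \<and> hgt x = hgt (act w (inv\<^bsub>H\<^esub> g))}"
    by (rule inj_on_subset[OF inj_g[OF gL]]) (use finfD[OF v] in blast)
  moreover have "\<And>x. x \<in> spt v \<Longrightarrow> sh H W act g v (act x g) = v x"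
    using finfD[OF v] act_g_ginv[OF gL] A1 g_c[OF gL] unfolding sh_def by auto
  ultimately show ?thesis
    unfolding rhoK_h[OF sh_fing[OF gL v] w] rhoK_h[OF v wt] by (simp add: sum.reindex)
qed

lemmas tinv_c = ginv_c[OF tL]
lemmas t_c = g_c[OF tL]
lemmas act_t_tinv = act_g_ginv[OF tL]
lemmas act_tinv_t = act_ginv_g[OF tL]
lemmas spt_sh = spt_shg[OF _ tL]
lemmas inj_t = inj_g[OF tL]
lemmas sh_fin = sh_fing[OF tL]
lemmas rho_sh = rho_shg[OF _ _ tL]

lemma rho_cong: assumes "v \<in> finf W" "w \<in> W" "u \<in> W" "base u = base w" "hgt u = hgt w"
  shows "rho K act v u = rho K act v w"
  using rhoK_h assms by simp

lemma tinj: assumes v: "v \<in> finf W" and hyp: "\<forall>w\<in>W. rho K act (sh H W act t v) w = rho K act v w"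
  shows "\<forall>w\<in>W. rho K act v w = 0"
proof
  fix w assume w: "w \<in> W"
  define c where "c j = crep (base w) (hgt w + int j)" for j
  have c: "c j \<in> W \<and> base (c j) = base w \<and> hgt (c j) = hgt w + int j" for j
    unfolding c_def using crep[OF w] by blast
  have step: "rho K act v (c (Suc j)) = rho K act v (c j)" for j
  proof -
    have "rho K act v (c (Suc j)) = rho K act v (act (c (Suc j)) (inv\<^bsub>H\<^esub> t))"
      using hyp rho_sh[OF v conjunct1[OF c]] c by simp
    also have "\<dots> = rho K act v (c j)"
      by (rule rho_cong[OF v conjunct1[OF c] A1[OF conjunct1[OF c] tinv_c]])
         (use c[of "Suc j"] c[of j] hgt_tinv[OF conjunct1[OF c[of "Suc j"]]] in auto)
    finally show ?thesis .
  qed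
  have eq: "rho K act v (c j) = rho K act v w" for j
  proof (induction j)
    case 0 show ?case by (rule rho_cong[OF v w]) (use c[of 0] in auto)
  next
    case (Suc j) then show ?case using step by simp
  qed
  define B where "B = (\<Sum>x\<in>spt v. \<bar>hgt x\<bar>)"
  have hb: "hgt x \<le> B" if "x \<in> spt v" for x
  proof -
    have "\<bar>hgt x\<bar> \<le> B" unfolding B_def using that finfD[OF v] by (intro member_le_sum) auto
    then show ?thesis by simp
  qed
  define j where "j = nat (B - hgt w + 1)"
  have cj: "hgt (c j) = hgt w + int j" using c by blast
  have "int j \<ge> B - hgt w + 1" unfolding j_def by simp
  then have Bc: "B < hgt (c j)" using cj by linarith
  have em: "{x\<in>spt v. base x = base (c j) \<and> hgt x = hgt (c j)} = {}"
    using hb Bc by fastforce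
  have "rho K act v (c j) = 0" unfolding rhoK_h[OF v conjunct1[OF c]] em by simp
  then show "rho K act v w = 0" using eq by simp
qed

lemma rhoK_rhoL: assumes v: "v \<in> finf W" and hyp: "\<forall>w\<in>W. rho K act v w = 0" and w: "w \<in> W"
  shows "rho L act v w = 0"
proof -
  let ?S = "{x\<in>spt v. base x = base w}"
  have fS: "finite ?S" using finfD[OF v] by simp
  have "rho L act v w = (\<Sum>m\<in>hgt ` ?S. \<Sum>x\<in>{x\<in>?S. hgt x = m}. v x)"
    unfolding rhoL_h[OF v w] using sum.image_gen[OF fS] by blast
  also have "\<dots> = 0"
  proof (rule sum.neutral, rule ballI)
    fix m assume "m \<in> hgt ` ?S"
    have "(\<Sum>x\<in>{x\<in>?S. hgt x = m}. v x) = rho K act v (crep (base w) m)"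
      using rhoK_h[OF v] crep[OF w] by (simp add: conj_assoc)
    then show "(\<Sum>x\<in>{x\<in>?S. hgt x = m}. v x) = 0" using hyp crep[OF w] by simp
  qed
  finally show ?thesis .
qed

end

lemma sum_split: "finite S \<Longrightarrow> sum f S = sum f {x\<in>S. P x} + sum f {x\<in>S. \<not> P x}"
proof -
  assume f: "finite S"
  have "S = {x\<in>S. P x} \<union> {x\<in>S. \<not> P x}" by blast
  then have "sum f S = sum f ({x\<in>S. P x} \<union> {x\<in>S. \<not> P x})" by simp
  also have "\<dots> = sum f {x\<in>S. P x} + sum f {x\<in>S. \<not> P x}"
    by (rule sum.union_disjoint) (use f in auto)
  finally show ?thesis .
qed

context zact begin

definition hul :: "('w \<Rightarrow> int) \<Rightarrow> ('w \<times> int) set" where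
  "hul v = {(b,m). \<exists>x1\<in>spt v. \<exists>x2\<in>spt v. base x1 = b \<and> base x2 = b \<and> hgt x1 \<le> m \<and> m \<le> hgt x2}"

lemma hul_fin: assumes v: "v \<in> finf W" shows "finite (hul v)"
proof -
  have "hul v \<subseteq> base ` spt v \<times> (\<Union>x1\<in>spt v. \<Union>x2\<in>spt v. {hgt x1..hgt x2})"
    unfolding hul_def by fastforce
  moreover have "finite (base ` spt v \<times> (\<Union>x1\<in>spt v. \<Union>x2\<in>spt v. {hgt x1..hgt x2}))"
    using finfD[OF v] by simp
  ultimately show ?thesis by (rule finite_subset)
qed

definition cum :: "('w \<Rightarrow> int) \<Rightarrow> 'w \<Rightarrow> int" where
  "cum v w = (\<Sum>x\<in>{x\<in>spt v. base x = base w \<and> hgt x \<le> hgt w}. v x)"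
definition dec :: "('w \<Rightarrow> int) \<Rightarrow> 'w \<Rightarrow> int" where
  "dec v u = (if u \<in> W \<and> u = crep (base u) (hgt u) then - cum v u else 0)"

lemma cum_split: assumes v: "v \<in> finf W" and hL: "\<forall>w\<in>W. rho L act v w = 0" and u: "u \<in> W"
  shows "cum v u = - (\<Sum>x\<in>{x\<in>spt v. base x = base u \<and> hgt u < hgt x}. v x)"
proof -
  let ?S = "{x\<in>spt v. base x = base u}"
  have fS: "finite ?S" using finfD[OF v] by simp
  have "0 = (\<Sum>x\<in>?S. v x)" using hL u rhoL_h[OF v u] by simp
  also have "\<dots> = (\<Sum>x\<in>{x\<in>?S. hgt x \<le> hgt u}. v x) + (\<Sum>x\<in>{x\<in>?S. \<not> hgt x \<le> hgt u}. v x)"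
    by (rule sum_split[OF fS])
  also have "{x\<in>?S. hgt x \<le> hgt u} = {x\<in>spt v. base x = base u \<and> hgt x \<le> hgt u}" by blast
  also have "{x\<in>?S. \<not> hgt x \<le> hgt u} = {x\<in>spt v. base x = base u \<and> hgt u < hgt x}" by auto
  finally show ?thesis unfolding cum_def by linarith
qed

lemma spt_dec: assumes v: "v \<in> finf W" and hL: "\<forall>w\<in>W. rho L act v w = 0" and u: "u \<in> spt (dec v)"
  shows "u \<in> W \<and> u = crep (base u) (hgt u) \<and> (\<exists>x1\<in>spt v. base x1 = base u \<and> hgt x1 \<le> hgt u)
    \<and> (\<exists>x2\<in>spt v. base x2 = base u \<and> hgt u < hgt x2)"
proof -
  have nz: "dec v u \<noteq> 0" using u by (simp add: spt_iff)
  then have uW: "u \<in> W" and uc: "u = crep (base u) (hgt u)" and cnz: "cum v u \<noteq> 0"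
    unfolding dec_def by (auto split: if_splits)
  have "{x\<in>spt v. base x = base u \<and> hgt x \<le> hgt u} \<noteq> {}"
    using cnz unfolding cum_def by (metis sum.empty)
  then have e1: "\<exists>x1\<in>spt v. base x1 = base u \<and> hgt x1 \<le> hgt u" by blast
  have "{x\<in>spt v. base x = base u \<and> hgt u < hgt x} \<noteq> {}"
    using cnz cum_split[OF v hL uW] by (metis add.inverse_neutral sum.empty)
  then have e2: "\<exists>x2\<in>spt v. base x2 = base u \<and> hgt u < hgt x2" by blast
  show ?thesis using uW uc e1 e2 by blast
qed

lemma dec_fin: assumes v: "v \<in> finf W" and hL: "\<forall>w\<in>W. rho L act v w = 0"
  shows "dec v \<in> finf W"
proof -
  have "spt (dec v) \<subseteq> (\<lambda>(b,m). crep b m) ` hul v"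
  proof
    fix u assume u: "u \<in> spt (dec v)"
    note s = spt_dec[OF v hL u]
    then have "(base u, hgt u) \<in> hul v" unfolding hul_def by force
    moreover have "u = (\<lambda>(b,m). crep b m) (base u, hgt u)" using s by simp
    ultimately show "u \<in> (\<lambda>(b,m). crep b m) ` hul v" by (rule rev_image_eqI)
  qed
  then have "finite (spt (dec v))" using hul_fin[OF v] finite_subset by blast
  moreover have "spt (dec v) \<subseteq> W" using spt_dec[OF v hL] by blast
  ultimately show ?thesis unfolding finf_def by blast
qed

lemma rho_dec: assumes v: "v \<in> finf W" and hL: "\<forall>w\<in>W. rho L act v w = 0" and w: "w \<in> W"
  shows "rho K act (dec v) w = - cum v w"
proof -
  define c where "c = crep (base w) (hgt w)"
  have c: "c \<in> W" "base c = base w" "hgt c = hgt w" using crep[OF w] unfolding c_def by auto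
  have co: "c \<in> orb K act w" using classK[OF c(1) w] c by simp
  have sub: "{u\<in>spt (dec v). u \<in> orb K act w} \<subseteq> {c}"
  proof
    fix u assume u: "u \<in> {u\<in>spt (dec v). u \<in> orb K act w}"
    note s = spt_dec[OF v hL conjunct1[OF u[simplified]]]
    have "base u = base w \<and> hgt u = hgt w" using classK[of u w] s w u by blast
    then show "u \<in> {c}" using s unfolding c_def by simp
  qed
  have "rho K act (dec v) w = (\<Sum>u\<in>{c}. dec v u)" unfolding rho_def
    by (rule sum.mono_neutral_left) (use sub co in \<open>auto simp: spt_iff\<close>)
  also have "\<dots> = dec v c" by simp
  also have "\<dots> = - cum v c" unfolding dec_def using c unfolding c_def by simp
  also have "cum v c = cum v w" unfolding cum_def using c by simp
  finally show ?thesis .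
qed

lemma dec_diff: assumes v: "v \<in> finf W" and hL: "\<forall>w\<in>W. rho L act v w = 0" and w: "w \<in> W"
  shows "rho K act v w = rho K act (sh H W act t (dec v)) w - rho K act (dec v) w"
proof -
  have wt: "act w (inv\<^bsub>H\<^esub> t) \<in> W" by (rule A1[OF w tinv_c])
  have ht: "base (act w (inv\<^bsub>H\<^esub> t)) = base w" "hgt (act w (inv\<^bsub>H\<^esub> t)) = hgt w - 1"
    using hgt_tinv[OF w] by auto
  let ?S = "{x\<in>spt v. base x = base w \<and> hgt x \<le> hgt w}"
  have fS: "finite ?S" using finfD[OF v] by simp
  have "cum v w = (\<Sum>x\<in>{x\<in>?S. hgt x \<le> hgt w - 1}. v x) + (\<Sum>x\<in>{x\<in>?S. \<not> hgt x \<le> hgt w - 1}. v x)"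
    unfolding cum_def by (rule sum_split[OF fS])
  also have "{x\<in>?S. hgt x \<le> hgt w - 1} = {x\<in>spt v. base x = base (act w (inv\<^bsub>H\<^esub> t)) \<and> hgt x \<le> hgt (act w (inv\<^bsub>H\<^esub> t))}"
    unfolding ht by auto
  also have "{x\<in>?S. \<not> hgt x \<le> hgt w - 1} = {x\<in>spt v. base x = base w \<and> hgt x = hgt w}" by auto
  finally have "cum v w = cum v (act w (inv\<^bsub>H\<^esub> t)) + rho K act v w"
    unfolding rhoK_h[OF v w] cum_def by simp
  moreover have "rho K act (sh H W act t (dec v)) w = - cum v (act w (inv\<^bsub>H\<^esub> t))"
    using rho_sh[OF dec_fin[OF v hL] w] rho_dec[OF v hL wt] by simp
  ultimately show ?thesis using rho_dec[OF v hL w] by simp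
qed

lemma hul_dec: assumes v: "v \<in> finf W" and hL: "\<forall>w\<in>W. rho L act v w = 0" and ne: "spt v \<noteq> {}"
  shows "card (hul (dec v)) < card (hul v)"
proof -
  have fh: "finite (hgt ` spt v)" "hgt ` spt v \<noteq> {}" using finfD[OF v] ne by auto
  obtain xm where xm: "xm \<in> spt v" "hgt xm = Max (hgt ` spt v)" using Max_in[OF fh] by auto
  have mx: "hgt x \<le> hgt xm" if "x \<in> spt v" for x using Max_ge[OF fh(1)] that xm by simp
  have sub: "hul (dec v) \<subseteq> hul v - {(base xm, hgt xm)}"
  proof
    fix p assume "p \<in> hul (dec v)"
    then obtain b m x1 x2 where p: "p = (b,m)" "x1 \<in> spt (dec v)" "x2 \<in> spt (dec v)" "base x1 = b" "base x2 = b"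
      "hgt x1 \<le> m" "m \<le> hgt x2" unfolding hul_def by blast
    obtain y1 where y1: "y1 \<in> spt v" "base y1 = base x1" "hgt y1 \<le> hgt x1" using spt_dec[OF v hL p(2)] by blast
    obtain y2 where y2: "y2 \<in> spt v" "base y2 = base x2" "hgt x2 < hgt y2" using spt_dec[OF v hL p(3)] by blast
    have "p \<in> hul v" unfolding hul_def using p y1 y2 by force
    moreover have "m < hgt xm" using mx[OF y2(1)] y2 p by simp
    ultimately show "p \<in> hul v - {(base xm, hgt xm)}" using p by auto
  qed
  have "(base xm, hgt xm) \<in> hul v" unfolding hul_def using xm by blast
  then have "hul (dec v) \<subset> hul v" using sub by blast
  then show ?thesis by (rule psubset_card_mono[OF hul_fin[OF v]])
qed

end

locale zpair = zstep +
  fixes W :: "'w set" and act :: "'w \<Rightarrow> 'a \<Rightarrow> 'w"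
    and W' :: "'v set" and act' :: "'v \<Rightarrow> 'a \<Rightarrow> 'v" and F :: "'w \<Rightarrow> 'v \<Rightarrow> int"
  assumes fa: "freeact H W act" and fb: "freeact H W' act'" and kn: "kern L W act W' act' F"

sublocale zpair \<subseteq> A: zact H K L \<phi> t W act
  by (rule zact.intro[OF zstep_axioms]) (simp add: zact_axioms_def fa)
sublocale zpair \<subseteq> B: zact H K L \<phi> t W' act'
  by (rule zact.intro[OF zstep_axioms]) (simp add: zact_axioms_def fb)

context zpair begin

lemma kn1: "w \<in> W \<Longrightarrow> F w \<in> finf W'" using kn unfolding kern_def by blast
lemma kn2: "w \<in> W \<Longrightarrow> y \<in> W' \<Longrightarrow> k \<in> L \<Longrightarrow> F (act w k) (act' y k) = F w y"
  using kn unfolding kern_def by blast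
lemma Fzero: assumes "w \<in> W" "y \<notin> W'" shows "F w y = 0"
proof -
  have "spt (F w) \<subseteq> W'" using finfD[OF kn1[OF assms(1)]] by blast
  then have "y \<notin> spt (F w)" using assms(2) by blast
  then show ?thesis by (simp add: spt_iff)
qed

lemma F_shift: assumes w: "w \<in> W" and g: "g \<in> L"
  shows "F (act w g) = sh H W' act' g (F w)"
proof
  fix z show "F (act w g) z = sh H W' act' g (F w) z"
  proof (cases "z \<in> W'")
    case True
    have zz: "act' z (inv\<^bsub>H\<^esub> g) \<in> W'" using B.A1[OF True B.ginv_c[OF g]] .
    have "F (act w g) z = F (act w g) (act' (act' z (inv\<^bsub>H\<^esub> g)) g)" using B.act_ginv_g[OF g True] by simp
    also have "\<dots> = F w (act' z (inv\<^bsub>H\<^esub> g))" by (rule kn2[OF w zz g])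
    finally show ?thesis unfolding sh_def using True by simp
  next
    case False
    then show ?thesis unfolding sh_def using Fzero[OF A.AL[OF w g] False] by simp
  qed
qed

lemma app_fin: assumes v: "v \<in> finf W" shows "app F v \<in> finf W'"
proof -
  have "spt (app F v) \<subseteq> (\<Union>w\<in>spt v. spt (F w))"
  proof
    fix y assume y: "y \<in> spt (app F v)"
    show "y \<in> (\<Union>w\<in>spt v. spt (F w))"
    proof (rule ccontr)
      assume "y \<notin> (\<Union>w\<in>spt v. spt (F w))"
      then have "\<forall>w\<in>spt v. F w y = 0" by (auto simp: spt_iff)
      then have "app F v y = 0" unfolding app_def by simp
      then show False using y by (simp add: spt_iff)
    qed
  qed
  moreover have "finite (\<Union>w\<in>spt v. spt (F w))" using finfD[OF v] finfD[OF kn1] by blast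
  moreover have "(\<Union>w\<in>spt v. spt (F w)) \<subseteq> W'" using finfD[OF v] finfD[OF kn1] by blast
  ultimately show ?thesis unfolding finf_def using finite_subset by blast
qed

lemma app_sh: assumes v: "v \<in> finf W"
  shows "app F (sh H W act t v) = sh H W' act' t (app F v)"
proof
  fix y
  have sW: "spt (sh H W act t v) \<subseteq> W" using finfD[OF A.sh_fin[OF v]] by blast
  show "app F (sh H W act t v) y = sh H W' act' t (app F v) y"
  proof (cases "y \<in> W'")
    case True
    have yy: "act' y (inv\<^bsub>H\<^esub> t) \<in> W'" using B.A1[OF True B.tinv_c] .
    have "app F (sh H W act t v) y = (\<Sum>u\<in>(\<lambda>x. act x t) ` spt v. sh H W act t v u * F u y)"
      unfolding app_def A.spt_sh[OF v] ..
    also have "\<dots> = (\<Sum>x\<in>spt v. sh H W act t v (act x t) * F (act x t) y)"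
      by (rule sum.reindex_cong[OF inj_on_subset[OF A.inj_t]]) (use finfD[OF v] in auto)
    also have "\<dots> = (\<Sum>x\<in>spt v. v x * F x (act' y (inv\<^bsub>H\<^esub> t)))"
    proof (rule sum.cong[OF refl])
      fix x assume x: "x \<in> spt v"
      have xW: "x \<in> W" using x finfD[OF v] by blast
      have "sh H W act t v (act x t) = v x" unfolding sh_def using A.A1[OF xW A.t_c] A.act_t_tinv[OF xW] by simp
      moreover have "F (act x t) y = F x (act' y (inv\<^bsub>H\<^esub> t))"
        using F_shift[OF xW tL] True unfolding sh_def by simp
      ultimately show "sh H W act t v (act x t) * F (act x t) y = v x * F x (act' y (inv\<^bsub>H\<^esub> t))" by simp
    qed
    also have "\<dots> = sh H W' act' t (app F v) y" unfolding sh_def app_def using True by simp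
    finally show ?thesis .
  next
    case False
    have "app F (sh H W act t v) y = 0" unfolding app_def using Fzero[OF _ False] sW by (simp add: sum.neutral subset_iff)
    then show ?thesis unfolding sh_def using False by simp
  qed
qed

lemma g_inv: assumes w: "w \<in> W" and k: "k \<in> K" and y: "y \<in> W'"
  shows "rho K act' (F (act w k)) y = rho K act' (F w) y"
proof -
  have kL: "k \<in> L" using k KL by blast
  have yk: "act' y (inv\<^bsub>H\<^esub> k) \<in> W'" using B.A1[OF y B.ginv_c[OF kL]] .
  have "rho K act' (F (act w k)) y = rho K act' (F w) (act' y (inv\<^bsub>H\<^esub> k))"
    unfolding F_shift[OF w kL] by (rule B.rho_shg[OF kn1[OF w] y kL])
  also have "\<dots> = rho K act' (F w) y"
  proof (rule B.rho_cong[OF kn1[OF w] y yk])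
    have "\<phi> (inv\<^bsub>H\<^esub> k) = 0" using phi_inv[OF kL] phi_ker[OF kL] k by simp
    then show "B.base (act' y (inv\<^bsub>H\<^esub> k)) = B.base y" "B.hgt (act' y (inv\<^bsub>H\<^esub> k)) = B.hgt y"
      using B.act_base_hgt[OF y invL[OF kL]] by auto
  qed
  finally show ?thesis .
qed

lemma factor: assumes v: "v \<in> finf W" and hv: "\<forall>w\<in>W. rho K act v w = 0" and y: "y \<in> W'"
  shows "rho K act' (app F v) y = 0"
proof -
  define Z where "Z = (\<Union>w\<in>spt v. spt (F w))"
  have fZ: "finite Z" unfolding Z_def using finfD[OF v] finfD[OF kn1] by blast
  have sZ: "spt (app F v) \<subseteq> Z"
  proof
    fix z assume z: "z \<in> spt (app F v)"
    show "z \<in> Z"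
    proof (rule ccontr)
      assume "z \<notin> Z"
      then have "\<forall>w\<in>spt v. F w z = 0" unfolding Z_def by (auto simp: spt_iff)
      then have "app F v z = 0" unfolding app_def by simp
      then show False using z by (simp add: spt_iff)
    qed
  qed
  define g where "g w = rho K act' (F w) y" for w
  have gZ: "g w = (\<Sum>z\<in>{z\<in>Z. z \<in> orb K act' y}. F w z)" if "w \<in> spt v" for w
    unfolding g_def by (rule rho_sup[OF fZ]) (use that in \<open>auto simp: Z_def\<close>)
  have "rho K act' (app F v) y = (\<Sum>z\<in>{z\<in>Z. z \<in> orb K act' y}. \<Sum>w\<in>spt v. v w * F w z)"
    unfolding rho_sup[OF fZ sZ] by (simp add: app_def)
  also have "\<dots> = (\<Sum>w\<in>spt v. \<Sum>z\<in>{z\<in>Z. z \<in> orb K act' y}. v w * F w z)"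
    by (rule sum.swap)
  also have "\<dots> = (\<Sum>w\<in>spt v. v w * g w)"
    by (rule sum.cong[OF refl]) (simp add: gZ sum_distrib_left)
  also have "\<dots> = 0"
  proof -
    let ?S = "spt v"
    define \<kappa> where "\<kappa> w = A.crep (A.base w) (A.hgt w)" for w
    have fS: "finite ?S" using finfD[OF v] by blast
    have "(\<Sum>w\<in>?S. v w * g w) = (\<Sum>c\<in>\<kappa> ` ?S. \<Sum>w\<in>{w\<in>?S. \<kappa> w = c}. v w * g w)"
      by (rule sum.image_gen[OF fS])
    also have "\<dots> = 0"
    proof (rule sum.neutral, rule ballI)
      fix c assume "c \<in> \<kappa> ` ?S"
      then obtain w0 where w0: "w0 \<in> ?S" "c = \<kappa> w0" by blast
      have w0W: "w0 \<in> W" using w0 finfD[OF v] by blast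
      have c: "c \<in> W" "A.base c = A.base w0" "A.hgt c = A.hgt w0"
        using A.crep[OF w0W] w0(2) unfolding \<kappa>_def by auto
      have cls: "{w\<in>?S. \<kappa> w = c} = {w\<in>?S. A.base w = A.base c \<and> A.hgt w = A.hgt c}"
      proof (rule Collect_cong)
        fix w
        show "(w \<in> ?S \<and> \<kappa> w = c) = (w \<in> ?S \<and> A.base w = A.base c \<and> A.hgt w = A.hgt c)"
        proof (cases "w \<in> ?S")
          case True
          then have wW: "w \<in> W" using finfD[OF v] by blast
          have "\<kappa> w = c \<longleftrightarrow> A.base w = A.base c \<and> A.hgt w = A.hgt c"
          proof
            assume "\<kappa> w = c" then show "A.base w = A.base c \<and> A.hgt w = A.hgt c"
              using A.crep[OF wW] unfolding \<kappa>_def by metis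
          next
            assume "A.base w = A.base c \<and> A.hgt w = A.hgt c"
            then show "\<kappa> w = c" using c w0(2) unfolding \<kappa>_def by simp
          qed
          then show ?thesis using True by simp
        qed simp
      qed
      have gc: "g w = g c" if "w \<in> {w\<in>?S. \<kappa> w = c}" for w
      proof -
        have wW: "w \<in> W" using that finfD[OF v] by blast
        have "A.base c = A.base w \<and> A.hgt c = A.hgt w" using that cls by auto
        then have "c \<in> orb K act w" using A.classK[OF c(1) wW] by simp
        then obtain k where k: "k \<in> K" "c = act w k" unfolding orb_def by blast
        show ?thesis unfolding g_def k(2) using g_inv[OF wW k(1) y] by simp
      qed
      have "(\<Sum>w\<in>{w\<in>?S. \<kappa> w = c}. v w * g w) = (\<Sum>w\<in>{w\<in>?S. \<kappa> w = c}. v w) * g c"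
        using gc by (simp add: sum_distrib_right)
      also have "(\<Sum>w\<in>{w\<in>?S. \<kappa> w = c}. v w) = rho K act v c"
        unfolding cls A.rhoK_h[OF v c(1)] ..
      also have "\<dots> = 0" using hv c(1) by blast
      finally show "(\<Sum>w\<in>{w\<in>?S. \<kappa> w = c}. v w * g w) = 0" by simp
    qed
    finally show ?thesis .
  qed
  finally show ?thesis .
qed

lemma Kcond:
  assumes Lcond: "\<forall>v\<in>finf W. (\<forall>y\<in>W'. rho L act' (app F v) y = 0) \<longrightarrow> (\<forall>w\<in>W. rho L act v w = 0)"
  shows "\<forall>v\<in>finf W. (\<forall>y\<in>W'. rho K act' (app F v) y = 0) \<longrightarrow> (\<forall>w\<in>W. rho K act v w = 0)"
proof -
  have main: "\<forall>v. card (A.hul v) = n \<longrightarrow> v \<in> finf W \<longrightarrow> (\<forall>y\<in>W'. rho K act' (app F v) y = 0)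
      \<longrightarrow> (\<forall>w\<in>W. rho K act v w = 0)" for n
  proof (induction n rule: less_induct)
    case (less n)
    show ?case
    proof (intro allI impI)
      fix v assume cn: "card (A.hul v) = n" and v: "v \<in> finf W"
        and hK: "\<forall>y\<in>W'. rho K act' (app F v) y = 0"
      show "\<forall>w\<in>W. rho K act v w = 0"
      proof (cases "spt v = {}")
        case True
        then show ?thesis unfolding rho_def by simp
      next
        case ne: False
        have av: "app F v \<in> finf W'" by (rule app_fin[OF v])
        have "\<forall>y\<in>W'. rho L act' (app F v) y = 0" using B.rhoK_rhoL[OF av hK] by blast
        then have hL: "\<forall>w\<in>W. rho L act v w = 0" using Lcond v by blast
        define v' where "v' = A.dec v"
        have v': "v' \<in> finf W" unfolding v'_def by (rule A.dec_fin[OF v hL])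
        have dd: "\<forall>w\<in>W. rho K act v w = rho K act (sh H W act t v') w - rho K act v' w"
          unfolding v'_def using A.dec_diff[OF v hL] by blast
        have lt: "card (A.hul v') < n" unfolding v'_def using A.hul_dec[OF v hL ne] cn by simp
        define d where "d = (\<lambda>u. sh H W act t v' u - v' u)"
        have d: "d \<in> finf W" unfolding d_def by (rule finf_diff[OF A.sh_fin[OF v'] v'])
        define x where "x = (\<lambda>u. v u - d u)"
        have x: "x \<in> finf W" unfolding x_def by (rule finf_diff[OF v d])
        have rd: "rho K act d w = rho K act (sh H W act t v') w - rho K act v' w" for w
          unfolding d_def by (rule rho_diff[OF conjunct1[OF finfD[OF A.sh_fin[OF v']]] conjunct1[OF finfD[OF v']]])
        have "rho K act x w = 0" if "w \<in> W" for w
          unfolding x_def rho_diff[OF conjunct1[OF finfD[OF v]] conjunct1[OF finfD[OF d]]] rd using dd that by simp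
        then have hx: "\<forall>y\<in>W'. rho K act' (app F x) y = 0" using factor[OF x] by blast
        have av': "app F v' \<in> finf W'" by (rule app_fin[OF v'])
        have ax: "app F x \<in> finf W'" by (rule app_fin[OF x])
        have ad: "app F d = (\<lambda>y. sh H W' act' t (app F v') y - app F v' y)"
          unfolding d_def app_diff[OF conjunct1[OF finfD[OF A.sh_fin[OF v']]] conjunct1[OF finfD[OF v']]] app_sh[OF v'] ..
        have dv: "d = (\<lambda>u. v u - x u)" unfolding x_def by simp
        have ad2: "app F d = (\<lambda>y. app F v y - app F x y)"
          unfolding dv by (rule app_diff[OF conjunct1[OF finfD[OF v]] conjunct1[OF finfD[OF x]]])
        have eqs: "\<forall>y\<in>W'. rho K act' (sh H W' act' t (app F v')) y = rho K act' (app F v') y"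
        proof
          fix y assume y: "y \<in> W'"
          have "rho K act' (sh H W' act' t (app F v')) y - rho K act' (app F v') y
              = rho K act' (app F d) y"
            unfolding ad by (rule rho_diff[OF conjunct1[OF finfD[OF B.sh_fin[OF av']]] conjunct1[OF finfD[OF av']], symmetric])
          also have "\<dots> = rho K act' (app F v) y - rho K act' (app F x) y"
            unfolding ad2 by (rule rho_diff[OF conjunct1[OF finfD[OF av]] conjunct1[OF finfD[OF ax]]])
          also have "\<dots> = 0" using hK hx y by simp
          finally show "rho K act' (sh H W' act' t (app F v')) y = rho K act' (app F v') y" by simp
        qed
        have "\<forall>y\<in>W'. rho K act' (app F v') y = 0" by (rule B.tinj[OF av' eqs])
        then have hv': "\<forall>w\<in>W. rho K act v' w = 0" using less.IH[OF lt] v' by blast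
        show ?thesis
        proof
          fix w assume w: "w \<in> W"
          have "rho K act (sh H W act t v') w = rho K act v' (act w (inv\<^bsub>H\<^esub> t))" by (rule A.rho_sh[OF v' w])
          also have "\<dots> = 0" using hv' A.A1[OF w A.tinv_c] by blast
          finally show "rho K act v w = 0" using dd hv' w by simp
        qed
      qed
    qed
  qed
  show ?thesis using main by blast
qed

end

definition DKi :: "('a,'b) monoid_scheme \<Rightarrow> 'a set \<Rightarrow> 'w set \<Rightarrow> ('w \<Rightarrow> 'a \<Rightarrow> 'w) \<Rightarrow> 'v set \<Rightarrow> ('v \<Rightarrow> 'a \<Rightarrow> 'v) \<Rightarrow> ('w \<Rightarrow> 'v \<Rightarrow> int) \<Rightarrow> bool" where
  "DKi H K W act W' act' F \<longleftrightarrow> (freeact H W act \<and> freeact H W' act' \<and> kern K W act W' act' F \<and>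
     (\<forall>v\<in>finf W. (\<forall>y\<in>W'. rho K act' (app F v) y = 0) \<longrightarrow> (\<forall>w\<in>W. rho K act v w = 0))
     \<longrightarrow> (\<forall>v\<in>finf W. app F v = (\<lambda>_. 0) \<longrightarrow> v = (\<lambda>_. 0)))"

lemma DK_step: assumes z: "zstep H K L \<phi> t" and IH: "DKi H K W act W' act' F"
  shows "DKi H L W act W' act' F"
  unfolding DKi_def
proof (intro impI)
  assume h: "freeact H W act \<and> freeact H W' act' \<and> kern L W act W' act' F \<and>
     (\<forall>v\<in>finf W. (\<forall>y\<in>W'. rho L act' (app F v) y = 0) \<longrightarrow> (\<forall>w\<in>W. rho L act v w = 0))"
  interpret zpair H K L \<phi> t W act W' act' F
    by (rule zpair.intro[OF z]) (simp add: zpair_axioms_def h)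
  have kK: "kern K W act W' act' F" using kn KL unfolding kern_def by blast
  show "\<forall>v\<in>finf W. app F v = (\<lambda>_. 0) \<longrightarrow> v = (\<lambda>_. 0)"
    using IH Kcond h kK fa fb unfolding DKi_def by blast
qed

lemma DK_base: assumes g: "group H" shows "DKi H {\<one>\<^bsub>H\<^esub>} W act W' act' F"
  unfolding DKi_def
proof (intro impI ballI)
  fix v assume h: "freeact H W act \<and> freeact H W' act' \<and> kern {\<one>\<^bsub>H\<^esub>} W act W' act' F \<and>
     (\<forall>v\<in>finf W. (\<forall>y\<in>W'. rho {\<one>\<^bsub>H\<^esub>} act' (app F v) y = 0) \<longrightarrow> (\<forall>w\<in>W. rho {\<one>\<^bsub>H\<^esub>} act v w = 0))"
    and v: "v \<in> finf W" and a: "app F v = (\<lambda>_. 0)"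
  have r1: "rho {\<one>\<^bsub>H\<^esub>} act v w = v w" if "w \<in> W" "\<forall>x\<in>W. act x \<one>\<^bsub>H\<^esub> = x" for v :: "'c \<Rightarrow> int" and W act w
  proof -
    have "{u\<in>spt v. u \<in> orb {\<one>\<^bsub>H\<^esub>} act w} = {u\<in>spt v. u = w}" unfolding orb_def using that by auto
    also have "{u\<in>spt v. u = w} = (if v w = 0 then {} else {w})" by (auto simp: spt_iff)
    finally show ?thesis unfolding rho_def by simp
  qed
  show "v = (\<lambda>_. 0)"
  proof -
    have "\<forall>y\<in>W'. rho {\<one>\<^bsub>H\<^esub>} act' (app F v) y = 0" unfolding a rho_def spt_def by simp
    then have "\<forall>w\<in>W. rho {\<one>\<^bsub>H\<^esub>} act v w = 0" using h v by blast
    then have "\<forall>w\<in>W. v w = 0" using r1 h unfolding freeact_def by metis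
    moreover have "\<forall>w. w \<notin> W \<longrightarrow> v w = 0" using finfD[OF v] by (auto simp: spt_iff)
    ultimately show "v = (\<lambda>_. 0)" by blast
  qed
qed

lemma rho_app: assumes fv: "finite (spt v)" and fF: "\<forall>w\<in>spt v. finite (spt (F w))"
  shows "rho K act' (app F v) y = (\<Sum>w\<in>spt v. v w * rho K act' (F w) y)"
proof -
  define Z where "Z = (\<Union>w\<in>spt v. spt (F w))"
  have fZ: "finite Z" unfolding Z_def using fv fF by blast
  have sZ: "spt (app F v) \<subseteq> Z"
  proof
    fix z assume z: "z \<in> spt (app F v)"
    show "z \<in> Z"
    proof (rule ccontr)
      assume "z \<notin> Z"
      then have "\<forall>w\<in>spt v. F w z = 0" unfolding Z_def by (auto simp: spt_iff)
      then have "app F v z = 0" unfolding app_def by simp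
      then show False using z by (simp add: spt_iff)
    qed
  qed
  have gZ: "rho K act' (F w) y = (\<Sum>z\<in>{z\<in>Z. z \<in> orb K act' y}. F w z)" if "w \<in> spt v" for w
    by (rule rho_sup[OF fZ]) (use that in \<open>auto simp: Z_def\<close>)
  have "rho K act' (app F v) y = (\<Sum>z\<in>{z\<in>Z. z \<in> orb K act' y}. \<Sum>w\<in>spt v. v w * F w z)"
    unfolding rho_sup[OF fZ sZ] by (simp add: app_def)
  also have "\<dots> = (\<Sum>w\<in>spt v. \<Sum>z\<in>{z\<in>Z. z \<in> orb K act' y}. v w * F w z)"
    by (rule sum.swap)
  also have "\<dots> = (\<Sum>w\<in>spt v. v w * rho K act' (F w) y)"
    by (rule sum.cong[OF refl]) (simp add: gZ sum_distrib_left)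
  finally show ?thesis .
qed

lemma polyZ_DK: assumes g: "group H" and p: "poly_Z H"
  shows "DKi H (carrier H) W act W' act' F"
proof -
  obtain k S where S: "S 0 = {\<one>\<^bsub>H\<^esub>}" "S k = carrier H" "\<forall>i\<le>k. subgroup (S i) H"
    "\<forall>i<k. S i \<subseteq> S (Suc i) \<and> normal (S i) (H\<lparr>carrier := S (Suc i)\<rparr>) \<and>
             ((H\<lparr>carrier := S (Suc i)\<rparr>) Mod (S i)) \<cong> integer_group"
    using p unfolding poly_Z_def by blast
  have "i \<le> k \<longrightarrow> DKi H (S i) W act W' act' F" for i
  proof (induction i)
    case 0 show ?case using DK_base[OF g] S(1) by simp
  next
    case (Suc i)
    show ?case
    proof
      assume ik: "Suc i \<le> k"
      then have IH: "DKi H (S i) W act W' act' F" using Suc by simp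
      have L: "subgroup (S (Suc i)) H" using S(3) ik by blast
      have i: "S i \<subseteq> S (Suc i)" "normal (S i) (H\<lparr>carrier := S (Suc i)\<rparr>)"
        "((H\<lparr>carrier := S (Suc i)\<rparr>) Mod (S i)) \<cong> integer_group" using S(4) ik by auto
      obtain \<phi> :: "_ \<Rightarrow> int" where \<phi>: "\<forall>a\<in>S (Suc i). \<forall>b\<in>S (Suc i). \<phi> (a \<otimes>\<^bsub>H\<^esub> b) = \<phi> a + \<phi> b"
        "\<forall>a\<in>S (Suc i). \<phi> a = 0 \<longleftrightarrow> a \<in> S i" "\<forall>m. \<exists>a\<in>S (Suc i). \<phi> a = m"
        using phi_exists[OF g L i] by (elim exE conjE) (rule that; assumption)
      obtain t where t: "t \<in> S (Suc i)" "\<phi> t = 1" using \<phi>(3) by blast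
      have z: "zstep H (S i) (S (Suc i)) \<phi> t"
        by (rule zstep.intro) (use g L i(1) \<phi> t in auto)
      show "DKi H (S (Suc i)) W act W' act' F" by (rule DK_step[OF z IH])
    qed
  qed
  then show ?thesis using S(2) by force
qed

definition Wn :: "('a,'b) monoid_scheme \<Rightarrow> nat \<Rightarrow> (nat \<times> 'a) set" where
  "Wn H n = {(j,x). j < n \<and> x \<in> carrier H}"
definition actn :: "('a,'b) monoid_scheme \<Rightarrow> nat \<times> 'a \<Rightarrow> 'a \<Rightarrow> nat \<times> 'a" where
  "actn H = (\<lambda>(j,x) h. (j, x \<otimes>\<^bsub>H\<^esub> h))"
definition Fn :: "('a,'b) monoid_scheme \<Rightarrow> nat \<Rightarrow> (nat \<Rightarrow> nat \<Rightarrow> ('a \<Rightarrow> int)) \<Rightarrow> nat \<times> 'a \<Rightarrow> nat \<times> 'a \<Rightarrow> int" where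
  "Fn H n A = (\<lambda>(j,h) (i,x). if i < n \<and> x \<in> carrier H \<and> h \<in> carrier H then A i j (x \<otimes>\<^bsub>H\<^esub> inv\<^bsub>H\<^esub> h) else 0)"

lemma spt_gr: "a \<in> group_ring H \<Longrightarrow> finite (spt a) \<and> spt a \<subseteq> carrier H"
  unfolding group_ring_def spt_def by auto

context group begin

lemma freeact_n: "freeact G (Wn G n) (actn G)"
  unfolding freeact_def Wn_def actn_def by (auto simp: m_assoc)

lemma right_cancel2: "x \<in> carrier G \<Longrightarrow> h \<in> carrier G \<Longrightarrow> k \<in> carrier G \<Longrightarrow>
   (x \<otimes> k) \<otimes> inv (h \<otimes> k) = x \<otimes> inv h"
  by (simp add: inv_mult_group m_assoc[symmetric]) (simp add: m_assoc r_inv)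

lemma spt_Fn: assumes A: "\<forall>i<n. \<forall>j<n. A i j \<in> group_ring G" and j: "j < n" and h: "h \<in> carrier G" and i: "i < n"
  shows "{z\<in>spt (Fn G n A (j,h)). fst z = i} = (\<lambda>g. (i, g \<otimes> h)) ` spt (A i j)"
proof -
  have sA: "spt (A i j) \<subseteq> carrier G" using spt_gr A i j by blast
  show ?thesis
  proof
    show "{z\<in>spt (Fn G n A (j,h)). fst z = i} \<subseteq> (\<lambda>g. (i, g \<otimes> h)) ` spt (A i j)"
    proof
      fix z assume z: "z \<in> {z\<in>spt (Fn G n A (j,h)). fst z = i}"
      obtain y where zy: "z = (i,y)" using z by (cases z) auto
      have y: "y \<in> carrier G" "A i j (y \<otimes> inv h) \<noteq> 0" using z zy h unfolding Fn_def spt_def by (auto split: if_splits)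
      have "y = (y \<otimes> inv h) \<otimes> h" using y h by (simp add: m_assoc l_inv)
      then show "z \<in> (\<lambda>g. (i, g \<otimes> h)) ` spt (A i j)" using zy y(2) by (auto simp: spt_iff intro!: image_eqI[where x="y \<otimes> inv h"])
    qed
    show "(\<lambda>g. (i, g \<otimes> h)) ` spt (A i j) \<subseteq> {z\<in>spt (Fn G n A (j,h)). fst z = i}"
    proof
      fix z assume "z \<in> (\<lambda>g. (i, g \<otimes> h)) ` spt (A i j)"
      then obtain g where g: "g \<in> spt (A i j)" "z = (i, g \<otimes> h)" by blast
      have gc: "g \<in> carrier G" using g sA by blast
      have "(g \<otimes> h) \<otimes> inv h = g" using gc h by (simp add: m_assoc r_inv)
      then show "z \<in> {z\<in>spt (Fn G n A (j,h)). fst z = i}" using g gc h i unfolding Fn_def by (simp add: spt_iff)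
    qed
  qed
qed

lemma kern_n: assumes A: "\<forall>i<n. \<forall>j<n. A i j \<in> group_ring G"
  shows "kern (carrier G) (Wn G n) (actn G) (Wn G n) (actn G) (Fn G n A)"
  unfolding kern_def
proof (intro conjI ballI)
  fix w assume w: "w \<in> Wn G n"
  then obtain j h where jh: "w = (j,h)" "j < n" "h \<in> carrier G" unfolding Wn_def by blast
  have "spt (Fn G n A w) \<subseteq> (\<Union>i<n. {z\<in>spt (Fn G n A (j,h)). fst z = i})"
    using jh unfolding Fn_def spt_def by (auto split: if_splits)
  also have "\<dots> = (\<Union>i<n. (\<lambda>g. (i, g \<otimes> h)) ` spt (A i j))" using spt_Fn[OF A jh(2,3)] by simp
  finally have s: "spt (Fn G n A w) \<subseteq> (\<Union>i<n. (\<lambda>g. (i, g \<otimes> h)) ` spt (A i j))" .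
  have "finite (\<Union>i<n. (\<lambda>g. (i, g \<otimes> h)) ` spt (A i j))" using spt_gr A jh(2) by blast
  moreover have "spt (Fn G n A w) \<subseteq> Wn G n" unfolding Fn_def spt_def Wn_def using jh by (auto split: if_splits)
  ultimately show "Fn G n A w \<in> finf (Wn G n)" unfolding finf_def using s finite_subset by blast
next
  fix w y k assume w: "w \<in> Wn G n" and y: "y \<in> Wn G n" and k: "k \<in> carrier G"
  obtain j h where jh: "w = (j,h)" "j < n" "h \<in> carrier G" using w unfolding Wn_def by blast
  obtain i x where ix: "y = (i,x)" "i < n" "x \<in> carrier G" using y unfolding Wn_def by blast
  show "Fn G n A (actn G w k) (actn G y k) = Fn G n A w y"
    unfolding jh ix actn_def Fn_def using jh ix k right_cancel2 by simp
qed

lemma orb_n: "x \<in> carrier G \<Longrightarrow> orb (carrier G) (actn G) (j,x) = {j} \<times> carrier G"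
proof
  assume x: "x \<in> carrier G"
  show "orb (carrier G) (actn G) (j,x) \<subseteq> {j} \<times> carrier G" unfolding orb_def actn_def using x by auto
  show "{j} \<times> carrier G \<subseteq> orb (carrier G) (actn G) (j,x)"
  proof
    fix z assume "z \<in> {j} \<times> carrier G"
    then obtain y where y: "z = (j,y)" "y \<in> carrier G" by blast
    have "y = x \<otimes> (inv x \<otimes> y)" using x y by (simp add: m_assoc[symmetric] r_inv)
    then show "z \<in> orb (carrier G) (actn G) (j,x)" unfolding orb_def actn_def using x y by auto
  qed
qed

lemma rho_n: assumes v: "v \<in> finf (Wn G n)" and x: "x \<in> carrier G"
  shows "rho (carrier G) (actn G) v (j,x) = (\<Sum>u\<in>{u\<in>spt v. fst u = j}. v u)"
proof -
  have "{u\<in>spt v. u \<in> orb (carrier G) (actn G) (j,x)} = {u\<in>spt v. fst u = j}"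
    unfolding orb_n[OF x] using finfD[OF v] unfolding Wn_def by auto
  then show ?thesis unfolding rho_def by simp
qed

lemma rho_Fn: assumes A: "\<forall>i<n. \<forall>j<n. A i j \<in> group_ring G" and j: "j < n" and h: "h \<in> carrier G"
  and i: "i < n" and x: "x \<in> carrier G"
  shows "rho (carrier G) (actn G) (Fn G n A (j,h)) (i,x) = augmentation (A i j)"
proof -
  have F: "Fn G n A (j,h) \<in> finf (Wn G n)" using kern_n[OF A] j h unfolding kern_def Wn_def by blast
  have sA: "spt (A i j) \<subseteq> carrier G" using spt_gr[of "A i j"] A i j by blast
  have inj: "inj_on (\<lambda>g. (i, g \<otimes> h)) (spt (A i j))"
  proof (rule inj_onI)
    fix a b assume ab: "a \<in> spt (A i j)" "b \<in> spt (A i j)" "(i, a \<otimes> h) = (i, b \<otimes> h)"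
    then have "a \<otimes> h = b \<otimes> h" by simp
    then show "a = b" using r_cancel[of a h b] h ab(1,2) sA by blast
  qed
  have "rho (carrier G) (actn G) (Fn G n A (j,h)) (i,x) = (\<Sum>u\<in>(\<lambda>g. (i, g \<otimes> h)) ` spt (A i j). Fn G n A (j,h) u)"
    unfolding rho_n[OF F x] spt_Fn[OF A j h i] ..
  also have "\<dots> = (\<Sum>g\<in>spt (A i j). Fn G n A (j,h) (i, g \<otimes> h))" by (rule sum.reindex[OF inj, unfolded comp_def])
  also have "\<dots> = (\<Sum>g\<in>spt (A i j). A i j g)"
  proof (rule sum.cong[OF refl])
    fix g assume g: "g \<in> spt (A i j)"
    have gc: "g \<in> carrier G" using g spt_gr[of "A i j"] A i j by blast
    have "(g \<otimes> h) \<otimes> inv h = g" using gc h by (simp add: m_assoc r_inv)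
    then show "Fn G n A (j,h) (i, g \<otimes> h) = A i j g" unfolding Fn_def using i gc h by simp
  qed
  also have "\<dots> = augmentation (A i j)" unfolding augmentation_def spt_def ..
  finally show ?thesis .
qed

end

context group begin

lemma top_n: assumes A: "\<forall>i<n. \<forall>j<n. A i j \<in> group_ring G"
  and inj: "inj_on (int_mat_apply n (\<lambda>i j. augmentation (A i j))) {x. \<forall>j\<ge>n. x j = 0}"
  shows "\<forall>v\<in>finf (Wn G n). (\<forall>y\<in>Wn G n. rho (carrier G) (actn G) (app (Fn G n A) v) y = 0)
     \<longrightarrow> (\<forall>w\<in>Wn G n. rho (carrier G) (actn G) v w = 0)"
proof (intro ballI impI)
  fix v w assume v: "v \<in> finf (Wn G n)"
    and hyp: "\<forall>y\<in>Wn G n. rho (carrier G) (actn G) (app (Fn G n A) v) y = 0" and w: "w \<in> Wn G n"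
  define E where "E j = (\<Sum>u\<in>{u\<in>spt v. fst u = j}. v u)" for j
  have fv: "finite (spt v)" and sv: "spt v \<subseteq> Wn G n" using finfD[OF v] by auto
  have fF: "\<forall>u\<in>spt v. finite (spt (Fn G n A u))"
    using kern_n[OF A] sv unfolding kern_def finf_def by blast
  have rapp: "rho (carrier G) (actn G) (app (Fn G n A) v) (i,x) = (\<Sum>j<n. augmentation (A i j) * E j)"
    if i: "i < n" and x: "x \<in> carrier G" for i x
  proof -
    have "rho (carrier G) (actn G) (app (Fn G n A) v) (i,x) = (\<Sum>u\<in>spt v. v u * rho (carrier G) (actn G) (Fn G n A u) (i,x))"
      by (rule rho_app[OF fv fF])
    also have "\<dots> = (\<Sum>u\<in>spt v. v u * augmentation (A i (fst u)))"
    proof (rule sum.cong[OF refl])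
      fix u assume u: "u \<in> spt v"
      then obtain j h where jh: "u = (j,h)" "j < n" "h \<in> carrier G" using sv unfolding Wn_def by blast
      show "v u * rho (carrier G) (actn G) (Fn G n A u) (i,x) = v u * augmentation (A i (fst u))"
        using rho_Fn[OF A jh(2,3) i x] jh(1) by simp
    qed
    also have "\<dots> = (\<Sum>j<n. \<Sum>u\<in>{u\<in>spt v. fst u = j}. v u * augmentation (A i (fst u)))"
      by (rule sum.group[symmetric, OF fv]) (use sv in \<open>auto simp: Wn_def\<close>)
    also have "\<dots> = (\<Sum>j<n. augmentation (A i j) * E j)"
      unfolding E_def by (rule sum.cong[OF refl]) (simp add: sum_distrib_left mult.commute)
    finally show ?thesis .
  qed
  define Xv where "Xv j = (if j < n then E j else 0)" for j
  have "int_mat_apply n (\<lambda>i j. augmentation (A i j)) Xv = int_mat_apply n (\<lambda>i j. augmentation (A i j)) (\<lambda>_. 0)"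
  proof
    fix i
    show "int_mat_apply n (\<lambda>i j. augmentation (A i j)) Xv i = int_mat_apply n (\<lambda>i j. augmentation (A i j)) (\<lambda>_. 0) i"
    proof (cases "i < n")
      case True
      have "(i, \<one>) \<in> Wn G n" using True unfolding Wn_def by simp
      then have "(\<Sum>j<n. augmentation (A i j) * E j) = 0" using hyp rapp[OF True one_closed] by simp
      moreover have "(\<Sum>j<n. augmentation (A i j) * Xv j) = (\<Sum>j<n. augmentation (A i j) * E j)"
        unfolding Xv_def by simp
      ultimately show ?thesis unfolding int_mat_apply_def using True by simp
    qed (simp add: int_mat_apply_def)
  qed
  then have "Xv = (\<lambda>_. 0)" by (rule inj_onD[OF inj]) (auto simp: Xv_def)
  obtain j x where jx: "w = (j,x)" "j < n" "x \<in> carrier G" using w unfolding Wn_def by blast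
  have "rho (carrier G) (actn G) v w = E j" unfolding jx(1) rho_n[OF v jx(3)] E_def ..
  also have "\<dots> = Xv j" unfolding Xv_def using jx by simp
  finally show "rho (carrier G) (actn G) v w = 0" using \<open>Xv = (\<lambda>_. 0)\<close> by simp
qed

lemma gr_mult_eq: assumes a: "a \<in> group_ring G" and b: "b \<in> group_ring G" and x: "x \<in> carrier G"
  shows "gr_mult G a b x = (\<Sum>h\<in>spt b. b h * a (x \<otimes> inv h))"
proof -
  have sa: "finite (spt a)" "spt a \<subseteq> carrier G" and sb: "finite (spt b)" "spt b \<subseteq> carrier G"
    using spt_gr[OF a] spt_gr[OF b] by auto
  have "gr_mult G a b x = (\<Sum>(g,h)\<in>spt a \<times> spt b. if g \<otimes> h = x then a g * b h else 0)"
    unfolding gr_mult_def spt_def ..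
  also have "\<dots> = (\<Sum>g\<in>spt a. \<Sum>h\<in>spt b. if g \<otimes> h = x then a g * b h else 0)"
    unfolding sum.cartesian_product' by simp
  also have "\<dots> = (\<Sum>h\<in>spt b. \<Sum>g\<in>spt a. if g \<otimes> h = x then a g * b h else 0)"
    by (rule sum.swap)
  also have "\<dots> = (\<Sum>h\<in>spt b. b h * a (x \<otimes> inv h))"
  proof (rule sum.cong[OF refl])
    fix h assume h: "h \<in> spt b"
    have hc: "h \<in> carrier G" using h sb by blast
    have "(\<Sum>g\<in>spt a. if g \<otimes> h = x then a g * b h else 0) = (\<Sum>g\<in>spt a. if g = x \<otimes> inv h then a g * b h else 0)"
    proof (rule sum.cong[OF refl])
      fix g assume "g \<in> spt a"
      then have gc: "g \<in> carrier G" using sa by blast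
      have "g \<otimes> h = x \<longleftrightarrow> g = x \<otimes> inv h" using inv_solve_right[OF gc x hc] by auto
      then show "(if g \<otimes> h = x then a g * b h else 0) = (if g = x \<otimes> inv h then a g * b h else 0)" by simp
    qed
    also have "\<dots> = (if x \<otimes> inv h \<in> spt a then a (x \<otimes> inv h) * b h else 0)"
      by (rule sum.delta[OF sa(1)])
    also have "\<dots> = b h * a (x \<otimes> inv h)" by (auto simp: spt_iff)
    finally show "(\<Sum>g\<in>spt a. if g \<otimes> h = x then a g * b h else 0) = b h * a (x \<otimes> inv h)" .
  qed
  finally show ?thesis .
qed

lemma gr_mult_out: assumes a: "a \<in> group_ring G" and b: "b \<in> group_ring G" and x: "x \<notin> carrier G"
  shows "gr_mult G a b x = 0"
proof -
  have "\<forall>p\<in>{g. a g \<noteq> 0} \<times> {h. b h \<noteq> 0}. (case p of (g,h) \<Rightarrow> if g \<otimes> h = x then a g * b h else 0) = 0"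
    using a b x unfolding group_ring_def by auto
  then show ?thesis unfolding gr_mult_def by (simp add: sum.neutral)
qed

lemma gr_app: assumes A: "\<forall>i<n. \<forall>j<n. A i j \<in> group_ring G"
  and v: "\<forall>j<n. v j \<in> group_ring G" and v0: "\<forall>j\<ge>n. v j = (\<lambda>_. 0)"
  shows "gr_mat_apply G n A v i x = app (Fn G n A) (\<lambda>(j,h). v j h) (i,x)"
    and "(\<lambda>(j,h). v j h) \<in> finf (Wn G n)"
proof -
  define S where "S = (SIGMA j:{..<n}. spt (v j))"
  have fS: "finite S" unfolding S_def using spt_gr v by auto
  have sS: "spt (\<lambda>(j,h). v j h) \<subseteq> S"
  proof
    fix p assume p: "p \<in> spt (\<lambda>(j,h). v j h)"
    obtain j h where jh: "p = (j,h)" by (cases p)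
    have nz: "v j h \<noteq> 0" using p jh by (simp add: spt_iff)
    have "j < n" using nz v0 by (metis not_less)
    then show "p \<in> S" unfolding S_def jh using nz by (simp add: spt_iff)
  qed
  have SW: "S \<subseteq> Wn G n" unfolding S_def Wn_def using spt_gr v by blast
  show "(\<lambda>(j,h). v j h) \<in> finf (Wn G n)" unfolding finf_def using sS fS SW finite_subset by blast
  have "app (Fn G n A) (\<lambda>(j,h). v j h) (i,x) = (\<Sum>(j,h)\<in>S. v j h * Fn G n A (j,h) (i,x))"
    unfolding app_sup[OF fS sS] by (simp add: split_def)
  also have "\<dots> = (\<Sum>j<n. \<Sum>h\<in>spt (v j). v j h * Fn G n A (j,h) (i,x))"
    unfolding S_def by (rule sum.Sigma[symmetric]) (use spt_gr v in auto)
  finally have e: "app (Fn G n A) (\<lambda>(j,h). v j h) (i,x) = (\<Sum>j<n. \<Sum>h\<in>spt (v j). v j h * Fn G n A (j,h) (i,x))" .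
  show "gr_mat_apply G n A v i x = app (Fn G n A) (\<lambda>(j,h). v j h) (i,x)"
  proof (cases "i < n \<and> x \<in> carrier G")
    case True
    have "(\<Sum>h\<in>spt (v j). v j h * Fn G n A (j,h) (i,x)) = gr_mult G (A i j) (v j) x" if j: "j < n" for j
    proof -
      have "(\<Sum>h\<in>spt (v j). v j h * Fn G n A (j,h) (i,x)) = (\<Sum>h\<in>spt (v j). v j h * A i j (x \<otimes> inv h))"
        by (rule sum.cong[OF refl]) (use True spt_gr[of "v j"] v j in \<open>auto simp: Fn_def\<close>)
      also have "\<dots> = gr_mult G (A i j) (v j) x" using gr_mult_eq[of "A i j" "v j" x] A v j True by simp
      finally show ?thesis .
    qed
    then show ?thesis unfolding e gr_mat_apply_def using True by simp
  next
    case False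
    have "\<And>j h. Fn G n A (j,h) (i,x) = 0" using False unfolding Fn_def by auto
    then have "(\<Sum>j<n. \<Sum>h\<in>spt (v j). v j h * Fn G n A (j,h) (i,x)) = 0" by simp
    moreover have "gr_mat_apply G n A v i x = 0"
    proof (cases "i < n")
      case True
      then have "x \<notin> carrier G" using False by simp
      then show ?thesis unfolding gr_mat_apply_def using True gr_mult_out A v by simp
    qed (simp add: gr_mat_apply_def)
    ultimately show ?thesis using e by simp
  qed
qed

end

theorem mainTheorem14:
  fixes H :: "('a, 'b) monoid_scheme"
    and n :: nat
    and A :: "nat \<Rightarrow> nat \<Rightarrow> ('a \<Rightarrow> int)"
  assumes "group H"
    and "poly_Z H"
    and "\<forall>i<n. \<forall>j<n. A i j \<in> group_ring H"
    and "inj_on (int_mat_apply n (\<lambda>i j. augmentation (A i j))) {x. \<forall>j\<ge>n. x j = 0}"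
  shows "inj_on (gr_mat_apply H n A) {v. (\<forall>j<n. v j \<in> group_ring H) \<and> (\<forall>j\<ge>n. v j = (\<lambda>_. 0))}"
proof -
  interpret group H by (rule assms(1))
  have DK: "DKi H (carrier H) (Wn H n) (actn H) (Wn H n) (actn H) (Fn H n A)"
    by (rule polyZ_DK[OF assms(1,2)])
  have Z: "\<forall>v\<in>finf (Wn H n). app (Fn H n A) v = (\<lambda>_. 0) \<longrightarrow> v = (\<lambda>_. 0)"
    using DK freeact_n kern_n[OF assms(3)] top_n[OF assms(3,4)] unfolding DKi_def by blast
  show ?thesis
  proof (rule inj_onI)
    fix v1 v2 assume v1: "v1 \<in> {v. (\<forall>j<n. v j \<in> group_ring H) \<and> (\<forall>j\<ge>n. v j = (\<lambda>_. 0))}"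
      and v2: "v2 \<in> {v. (\<forall>j<n. v j \<in> group_ring H) \<and> (\<forall>j\<ge>n. v j = (\<lambda>_. 0))}"
      and eq: "gr_mat_apply H n A v1 = gr_mat_apply H n A v2"
    let ?V1 = "\<lambda>(j,h). v1 j h" and ?V2 = "\<lambda>(j,h). v2 j h"
    have g1: "gr_mat_apply H n A v1 i x = app (Fn H n A) ?V1 (i,x)" and f1: "?V1 \<in> finf (Wn H n)" for i x
      using gr_app[OF assms(3)] v1 by auto
    have g2: "gr_mat_apply H n A v2 i x = app (Fn H n A) ?V2 (i,x)" and f2: "?V2 \<in> finf (Wn H n)" for i x
      using gr_app[OF assms(3)] v2 by auto
    have ae: "app (Fn H n A) ?V1 = app (Fn H n A) ?V2"
    proof
      fix z :: "nat \<times> 'a"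
      obtain i x where "z = (i,x)" by (cases z)
      then show "app (Fn H n A) ?V1 z = app (Fn H n A) ?V2 z" using g1 g2 eq by metis
    qed
    have d: "(\<lambda>u. ?V1 u - ?V2 u) \<in> finf (Wn H n)" by (rule finf_diff[OF f1 f2])
    have "app (Fn H n A) (\<lambda>u. ?V1 u - ?V2 u) = (\<lambda>_. 0)"
      unfolding app_diff[OF conjunct1[OF finfD[OF f1]] conjunct1[OF finfD[OF f2]]] ae by simp
    then have "(\<lambda>u. ?V1 u - ?V2 u) = (\<lambda>_. 0)" using Z d by blast
    then have "?V1 (j,h) = ?V2 (j,h)" for j h by (metis (mono_tags) eq_iff_diff_eq_0)
    then show "v1 = v2" by (intro ext) simp
  qed
qed

end
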